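(* Let $k\geq0$ and let $w,\bar w\in W_n$ both be increasing up to $k$ and have the same $k$-truncated A-code, with $\ell(w)=\ell(\bar w)+1$. Suppose that $v(\bar w)=s_iv(w)$ for some simple reflection $s_i$, $i\geq0$. Then $\bar w=s_iw$.
   Context: $W_n$ is the group of signed permutations $w=(w_1,\ldots,w_n)$ of $\{1,\ldots,n\}$; $\ell(w)=\#\{i<j\mid w_i>w_j\}+\sum_{w_i<0}|w_i|$. Left multiplication: for $i\geq1$, $s_iw$ is obtained by interchanging the values $i$ and $i+1$ (and $-i$ and $-(i+1)$) in $w$; $s_0w$ changes the sign of the entry equal to $\pm1$. $w$ is increasing up to $k$ if $0<w_1<\cdots<w_k$ (vacuous for $k=0$). The A-code is $\gamma_i:=\#\{j>i\mid w_j<w_i\}$ and the $k$-truncated A-code is $(\gamma_{k+1},\ldots,\gamma_n)$. $v(w)$ is the element obtained from $w$ by rearranging the entries $w_{k+1},\ldots,w_n$ in increasing order. *)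

theory Defs
  imports Main
begin

text \<open>A signed permutation w = (w_1,...,w_n) in W_n is represented as a list of
  integers of length n (0-indexed: w ! 0 = w_1) whose absolute values are 1..n.\<close>

definition signed_perm :: "nat \<Rightarrow> int list \<Rightarrow> bool" where
  "signed_perm n w \<longleftrightarrow> length w = n \<and> distinct (map abs w) \<and> abs ` set w = {1..int n}"

definition bLength :: "int list \<Rightarrow> nat" where
  "bLength w = card {(i, j). i < j \<and> j < length w \<and> w ! i > w ! j}
     + (\<Sum>i\<in>{i. i < length w \<and> w ! i < 0}. nat \<bar>w ! i\<bar>)"

text \<open>Left multiplication by the simple reflection s_i.\<close>
definition sval :: "nat \<Rightarrow> int \<Rightarrow> int" where
  "sval i x = (if i = 0 then (if \<bar>x\<bar> = 1 then - x else x)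
     else if x = int i then int i + 1
     else if x = int i + 1 then int i
     else if x = - int i then - (int i + 1)
     else if x = - (int i + 1) then - int i
     else x)"

definition sleft :: "nat \<Rightarrow> int list \<Rightarrow> int list" where
  "sleft i w = map (sval i) w"

definition incr_up_to :: "nat \<Rightarrow> int list \<Rightarrow> bool" where
  "incr_up_to k w \<longleftrightarrow> (\<forall>j < k. 0 < w ! j) \<and> (\<forall>j. Suc j < k \<longrightarrow> w ! j < w ! Suc j)"

text \<open>A-code gamma_i (0-indexed position i).\<close>
definition acode :: "int list \<Rightarrow> nat \<Rightarrow> nat" where
  "acode w i = card {j. i < j \<and> j < length w \<and> w ! j < w ! i}"

definition trunc_acode :: "nat \<Rightarrow> int list \<Rightarrow> nat list" where
  "trunc_acode k w = map (acode w) [k..<length w]"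

definition vk :: "nat \<Rightarrow> int list \<Rightarrow> int list" where
  "vk k w = take k w @ sort (drop k w)"

end

theory Submission
  imports Defs "HOL-Library.Multiset"
begin

lemma sval_inv: "sval i (sval i x) = x"
  by (auto simp: sval_def)

lemma sval_inj: "inj (sval i)"
  by (metis injI sval_inv)

lemma rank_inj:
  fixes a b :: int
  assumes "finite S" "a \<in> S" "b \<in> S" "card {y\<in>S. y<a} = card {y\<in>S. y<b}"
  shows "a = b"
proof (rule ccontr)
  assume "a \<noteq> b"
  then consider "a < b" | "b < a" by linarith
  then show False
  proof cases
    case 1
    have "{y\<in>S. y<a} \<subset> {y\<in>S. y<b}" using 1 assms by auto
    then have "card {y\<in>S. y<a} < card {y\<in>S. y<b}" using assms(1) by (intro psubset_card_mono) auto
    then show False using assms by simp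
  next
    case 2
    have "{y\<in>S. y<b} \<subset> {y\<in>S. y<a}" using 2 assms by auto
    then have "card {y\<in>S. y<b} < card {y\<in>S. y<a}" using assms(1) by (intro psubset_card_mono) auto
    then show False using assms by simp
  qed
qed

lemma acode_rank:
  assumes "k < length u" "distinct (drop k u)"
  shows "acode u k = card {y \<in> set (drop k u). y < u!k}"
proof -
  let ?A = "{j. k<j \<and> j<length u \<and> u!j<u!k}"
  have inj: "inj_on (nth u) ?A"
  proof (rule inj_onI)
    fix j1 j2 assume "j1 \<in> ?A" "j2 \<in> ?A" "u!j1 = u!j2"
    then have "drop k u ! (j1-k) = drop k u ! (j2-k)" by auto
    moreover have "j1 - k < length (drop k u)" "j2 - k < length (drop k u)" using \<open>j1 \<in> ?A\<close> \<open>j2 \<in> ?A\<close> by auto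
    ultimately have "j1 - k = j2 - k" using assms(2) nth_eq_iff_index_eq by blast
    then show "j1 = j2" using \<open>j1 \<in> ?A\<close> \<open>j2 \<in> ?A\<close> by auto
  qed
  have img: "nth u ` ?A = {y \<in> set (drop k u). y < u!k}"
  proof
    show "nth u ` ?A \<subseteq> {y \<in> set (drop k u). y < u!k}"
    proof
      fix y assume "y \<in> nth u ` ?A"
      then obtain j where j: "j \<in> ?A" "y = u!j" by auto
      then have "y = drop k u ! (j-k)" "j - k < length (drop k u)" by auto
      then have "y \<in> set (drop k u)" by (metis nth_mem)
      then show "y \<in> {y \<in> set (drop k u). y < u!k}" using j by auto
    qed
  next
    show "{y \<in> set (drop k u). y < u!k} \<subseteq> nth u ` ?A"
    proof
      fix y assume y: "y \<in> {y \<in> set (drop k u). y < u!k}"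
      then obtain t where t: "t < length (drop k u)" "y = drop k u ! t" by (metis in_set_conv_nth mem_Collect_eq)
      then have yt: "y = u!(k+t)" using assms by auto
      have "t \<noteq> 0"
      proof
        assume "t = 0" then show False using y yt by simp
      qed
      then have "k+t \<in> ?A" using t y yt by auto
      then show "y \<in> nth u ` ?A" using yt by blast
    qed
  qed
  have "acode u k = card ?A" by (simp add: acode_def)
  also have "\<dots> = card (nth u ` ?A)" using inj by (simp add: card_image)
  also have "\<dots> = card {y \<in> set (drop k u). y < u!k}" using img by simp
  finally show ?thesis .
qed

lemma uniq:
  "length u = length u' \<Longrightarrow> take k u = take k u' \<Longrightarrow> set (drop k u) = set (drop k u')
   \<Longrightarrow> distinct (drop k u) \<Longrightarrow> distinct (drop k u')
   \<Longrightarrow> (\<forall>j. k \<le> j \<and> j < length u \<longrightarrow> acode u j = acode u' j) \<Longrightarrow> u = (u' :: int list)"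
proof (induction "length u - k" arbitrary: k)
  case 0
  then show ?case by (metis diff_is_0_eq take_all)
next
  case (Suc m)
  have kl: "k < length u" using Suc by linarith
  have r1: "acode u k = card {y \<in> set (drop k u). y < u!k}" using acode_rank kl Suc by blast
  have r2: "acode u' k = card {y \<in> set (drop k u'). y < u'!k}" using acode_rank kl Suc by simp
  have m1: "u!k \<in> set (drop k u)" using kl by (metis Cons_nth_drop_Suc list.set_intros(1))
  have m2: "u'!k \<in> set (drop k u)" using kl Suc by (metis Cons_nth_drop_Suc list.set_intros(1))
  have eqk: "u!k = u'!k"
    using rank_inj[OF finite_set m1 m2] r1 r2 Suc kl by simp
  have d1: "drop k u = u!k # drop (Suc k) u" using kl by (simp add: Cons_nth_drop_Suc)
  have d2: "drop k u' = u'!k # drop (Suc k) u'" using kl Suc by (simp add: Cons_nth_drop_Suc)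
  show ?case
  proof (rule Suc.hyps(1)[of "Suc k"])
    show "m = length u - Suc k" using Suc by linarith
    show "length u = length u'" by fact
    show "take (Suc k) u = take (Suc k) u'" using Suc kl eqk by (simp add: take_Suc_conv_app_nth)
    show "set (drop (Suc k) u) = set (drop (Suc k) u')"
      using Suc.prems(3,4,5) d1 d2 eqk by (metis distinct.simps(2) list.simps(15) Diff_insert_absorb)
    show "distinct (drop (Suc k) u)" using Suc.prems(4) d1 by (metis distinct.simps(2))
    show "distinct (drop (Suc k) u')" using Suc.prems(5) d2 by (metis distinct.simps(2))
    show "\<forall>j. Suc k \<le> j \<and> j < length u \<longrightarrow> acode u j = acode u' j" using Suc.prems(6) by auto
  qed
qed

lemma sort_map_mono:
  assumes "\<forall>x\<in>set xs. \<forall>y\<in>set xs. x < y \<longrightarrow> f x < (f y :: int)"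
  shows "sort (map f xs) = map f (sort (xs :: int list))"
proof -
  have "sorted (map f (sort xs))"
    unfolding sorted_wrt_map
    by (rule sorted_wrt_mono_rel[OF _ sorted_sort[of xs, unfolded sorted_wrt_map]])
       (use assms in \<open>auto simp: order_le_less\<close>)
  then show ?thesis
    by (metis mset_map mset_sort properties_for_sort)
qed

theorem lemma10:
  fixes n k i :: nat and w wb :: "int list"
  assumes "signed_perm n w" and "signed_perm n wb"
    and "k \<le> n"
    and "incr_up_to k w" and "incr_up_to k wb"
    and "trunc_acode k w = trunc_acode k wb"
    and "bLength w = bLength wb + 1"
    and "i < n"
    and "vk k wb = sleft i (vk k w)"
  shows "wb = sleft i w"
proof -
  define f where "f = sval i"
  define D where "D = drop k w"
  have lw: "length w = n" and lwb: "length wb = n" using assms(1,2) by (auto simp: signed_perm_def)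
  have dw: "distinct w" using assms(1) by (auto simp: signed_perm_def distinct_map)
  have dwb: "distinct wb" using assms(2) by (auto simp: signed_perm_def distinct_map)
  have injf: "inj f" unfolding f_def by (rule sval_inj)
  have "take k wb @ sort (drop k wb) = map f (take k w) @ map f (sort D)"
    using assms(9) by (simp add: vk_def sleft_def f_def D_def)
  moreover have "length (take k wb) = length (map f (take k w))" using lw lwb assms(3) by simp
  ultimately have e1: "take k wb = map f (take k w)" and e2: "sort (drop k wb) = map f (sort D)"
    by (auto dest: append_eq_append_conv[THEN iffD1])
  have sD: "sorted (map f (sort D))" using e2 by (metis sorted_sort)
  have dD: "distinct (sort D)" using dw by (simp add: D_def distinct_drop)
  have smono: "\<forall>x\<in>set D. \<forall>y\<in>set D. x < y \<longrightarrow> f x < f y"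
  proof (intro ballI impI)
    fix x y assume xy: "x \<in> set D" "y \<in> set D" "x < y"
    obtain a where a: "a < length (sort D)" "sort D ! a = x" using xy by (metis in_set_conv_nth set_sort)
    obtain b where b: "b < length (sort D)" "sort D ! b = y" using xy by (metis in_set_conv_nth set_sort)
    have "\<not> b \<le> a"
    proof
      assume "b \<le> a"
      then have "sort D ! b \<le> sort D ! a" using a by (intro sorted_nth_mono) auto
      then show False using a b xy by simp
    qed
    then have "map f (sort D) ! a \<le> map f (sort D) ! b" using sD a b by (intro sorted_nth_mono) auto
    then have "f x \<le> f y" using a b by simp
    moreover have "f x \<noteq> f y" using injf xy by (metis inj_eq less_irrefl)
    ultimately show "f x < f y" by simp
  qed
  have refl: "x < y \<longleftrightarrow> f x < f y" if "x \<in> set D" "y \<in> set D" for x y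
    using smono that by (metis linorder_neqE less_asym less_irrefl)
  have memD: "w!j \<in> set D" if "k \<le> j" "j < length w" for j
  proof -
    have "drop k w ! (j-k) = w!j" "j - k < length (drop k w)" using that by auto
    then show ?thesis unfolding D_def by (metis nth_mem)
  qed
  define w' where "w' = sleft i w"
  have w'm: "w' = map f w" by (simp add: w'_def sleft_def f_def)
  have "drop k w' = map f D" by (simp add: w'm D_def drop_map)
  then have sw': "sort (drop k w') = sort (drop k wb)" using e2 sort_map_mono[OF smono] by simp
  have code: "acode w' j = acode w j" if "k \<le> j" "j < n" for j
  proof -
    have "{j'. j < j' \<and> j' < length w' \<and> w' ! j' < w' ! j} = {j'. j < j' \<and> j' < length w \<and> w ! j' < w ! j}"
    proof (intro Collect_cong iffI)
      fix j' 
      assume h: "j < j' \<and> j' < length w' \<and> w' ! j' < w' ! j"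
      then have "w!j' \<in> set D" "w!j \<in> set D" using that lw w'm
        using memD by auto
      then show "j < j' \<and> j' < length w \<and> w ! j' < w ! j" using h refl w'm that lw by auto
    next
      fix j' 
      assume h: "j < j' \<and> j' < length w \<and> w ! j' < w ! j"
      then have "w!j' \<in> set D" "w!j \<in> set D" using that lw
        using memD by auto
      then show "j < j' \<and> j' < length w' \<and> w' ! j' < w' ! j" using h refl w'm that lw by auto
    qed
    then show ?thesis by (simp add: acode_def)
  qed
  have "wb = w'"
  proof (rule uniq[of wb w' k])
    show "length wb = length w'" using lw lwb w'm by simp
    show "take k wb = take k w'" using e1 w'm by (simp add: take_map)
    show "set (drop k wb) = set (drop k w')" using sw' by (metis set_sort)
    show "distinct (drop k wb)" using dwb by (simp add: distinct_drop)
    show "distinct (drop k w')" using dw injf w'm by (simp add: distinct_drop distinct_map inj_on_subset)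
    show "\<forall>j. k \<le> j \<and> j < length wb \<longrightarrow> acode wb j = acode w' j"
    proof (intro allI impI)
      fix j assume j: "k \<le> j \<and> j < length wb"
      have "trunc_acode k w ! (j-k) = trunc_acode k wb ! (j-k)" using assms(6) by simp
      moreover have "j - k < length [k..<n]" "[k..<n] ! (j-k) = j" using j lwb by auto
      ultimately have "acode w j = acode wb j" using j lw lwb unfolding trunc_acode_def
        by (metis nth_map)
      then show "acode wb j = acode w' j" using code j lwb by simp
    qed
  qed
  then show ?thesis by (simp add: w'_def)
qed

end
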